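(* Let $K$ be a virtual knot and let $P_K$ be its affine index polynomial. Write $P_K=(t-1)\sum_{n\in\mathbb{Z}}a_n t^n$ with integers $a_n$ (only finitely many nonzero). Then \[F_d(K)\ \ge\ \frac{\sum_{n\in\mathbb{Z}}|a_n|}{2}.\]
   Context: Virtual knots are equivalence classes of virtual knot diagrams (or Gauss diagrams) under classical and virtual Reidemeister moves. A Gauss diagram is an oriented circle with signed arrows, one per real crossing, from the over-crossing preimage to the under-crossing preimage, signed by the crossing sign $\varepsilon(\gamma)=\pm1$. A forbidden detour move is the local move on virtual knot diagrams whose effect on Gauss diagrams is to exchange the positions of an arrow head and an arrow tail (of different arrows) that are adjacent on the circle, keeping signs. Every virtual knot diagram can be turned into the trivial (crossingless) diagram by Reidemeister moves, virtual Reidemeister moves and forbidden detour moves; the forbidden detour number $F_d(K)$ is the minimal number of forbidden detour moves needed to transform a diagram of $K$ into the trivial knot diagram (Reidemeister and virtual Reidemeister moves being free). Affine index polynomial: for an arrow $\gamma=\overrightarrow{PQ}$ give its endpoints signs $\varepsilon(P)=-\varepsilon(\gamma)$, $\varepsilon(Q)=\varepsilon(\gamma)$; the index $i(\gamma)$ is the sum of the signs of all arrow endpoints, other than $P,Q$, lying on the arc of the circle from $P$ to $Q$ in the direction of the circle's orientation. Set $J_n(K)=\sum_{i(\gamma)=n}\varepsilon(\gamma)$ for $n\neq0$ and $P_K=\sum_{n\in\mathbb{Z}}J_n(K)(t^{-n}-1)$, a Laurent polynomial invariant of $K$ (equal to Kauffman's affine index polynomial); note $P_K(1)=0$, so it is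 divisible by $t-1$. *)

theory Defs
  imports "HOL-Computational_Algebra.Formal_Laurent_Series" "HOL-Library.Extended_Real"
begin

text \<open>A Gauss diagram is recorded as the cyclic sequence (read in the direction of the
circle's orientation, starting at an arbitrary point) of arrow endpoints.  Each endpoint
carries the label of its arrow, whether it is the head (under-crossing preimage) or the tail
(over-crossing preimage), and the sign of its arrow (True = +1, False = -1).\<close>

datatype endpt = Endpt (lab: nat) (is_head: bool) (positive: bool)

type_synonym gauss = "endpt list"

definition sg :: "bool \<Rightarrow> int" where
  "sg b = (if b then 1 else -1)"

definition wf_gauss :: "gauss \<Rightarrow> bool" where
  "wf_gauss w \<longleftrightarrow> (\<forall>a \<in> lab ` set w. \<exists>s.
      mset (filter (\<lambda>e. lab e = a) w) = {# Endpt a False s, Endpt a True s #})"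

definition arrows :: "gauss \<Rightarrow> nat set" where
  "arrows w = lab ` set w"

text \<open>Changing the base point of the circle (the word is cyclic).\<close>
definition rot_step :: "gauss \<Rightarrow> gauss \<Rightarrow> bool" where
  "rot_step w w' \<longleftrightarrow> (\<exists>u v. w = u @ v \<and> w' = v @ u)"

definition relabel_step :: "gauss \<Rightarrow> gauss \<Rightarrow> bool" where
  "relabel_step w w' \<longleftrightarrow> (\<exists>f. inj f \<and>
      w' = map (\<lambda>e. Endpt (f (lab e)) (is_head e) (positive e)) w)"

text \<open>Reidemeister 1: an isolated arrow (endpoints adjacent), any sign and direction.\<close>
definition r1_step :: "gauss \<Rightarrow> gauss \<Rightarrow> bool" where
  "r1_step w w' \<longleftrightarrow> (\<exists>u v a h s.
      w = u @ [Endpt a h s, Endpt a (\<not> h) s] @ v \<and> w' = u @ v)"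

text \<open>Reidemeister 2: two arrows of opposite signs with adjacent tails and adjacent heads
(heads in either order: parallel or antiparallel strands).\<close>
definition r2_step :: "gauss \<Rightarrow> gauss \<Rightarrow> bool" where
  "r2_step w w' \<longleftrightarrow> (\<exists>u v x a b s hb.
      w = u @ [Endpt a False s, Endpt b False (\<not> s)] @ v @
          (if hb then [Endpt a True s, Endpt b True (\<not> s)]
                 else [Endpt b True (\<not> s), Endpt a True s]) @ x
      \<and> w' = u @ v @ x)"

text \<open>Reidemeister 3.  Arrows a (top over middle), b (top over bottom), c (middle over
bottom) with signs ea, eb, ec.  The top strand segment contains the tails of a, b; the middle
strand segment the head of a and the tail of c; the bottom strand segment the heads of b, c.
The booleans o1, o2, o3 record the order of the two endpoints in each segment.  The realizability condition below is derived from the planar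
model of three oriented lines passing through a triple point.\<close>
definition seg1 :: "bool \<Rightarrow> nat \<Rightarrow> nat \<Rightarrow> bool \<Rightarrow> bool \<Rightarrow> gauss" where
  "seg1 o1 a b ea eb = (if o1 then [Endpt a False ea, Endpt b False eb]
                              else [Endpt b False eb, Endpt a False ea])"
definition seg2 :: "bool \<Rightarrow> nat \<Rightarrow> nat \<Rightarrow> bool \<Rightarrow> bool \<Rightarrow> gauss" where
  "seg2 o2 a c ea ec = (if o2 then [Endpt a True ea, Endpt c False ec]
                              else [Endpt c False ec, Endpt a True ea])"
definition seg3 :: "bool \<Rightarrow> nat \<Rightarrow> nat \<Rightarrow> bool \<Rightarrow> bool \<Rightarrow> gauss" where
  "seg3 o3 b c eb ec = (if o3 then [Endpt b True eb, Endpt c True ec]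
                              else [Endpt c True ec, Endpt b True eb])"

definition r3_ok :: "bool \<Rightarrow> bool \<Rightarrow> bool \<Rightarrow> bool \<Rightarrow> bool \<Rightarrow> bool \<Rightarrow> bool" where
  "r3_ok o1 o2 o3 ea eb ec \<longleftrightarrow>
     sg o1 * sg eb = sg o2 * sg ec \<and> sg o3 * sg ea = sg o1 * sg ec"

definition r3_step :: "gauss \<Rightarrow> gauss \<Rightarrow> bool" where
  "r3_step w w' \<longleftrightarrow> (\<exists>u v x y a b c ea eb ec o1 o2 o3.
      r3_ok o1 o2 o3 ea eb ec \<and>
      (let S1 = seg1 o1 a b ea eb; S2 = seg2 o2 a c ea ec; S3 = seg3 o3 b c eb ec in
        (w = u @ S1 @ v @ S2 @ x @ S3 @ y \<and>
         w' = u @ rev S1 @ v @ rev S2 @ x @ rev S3 @ y) \<or>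
        (w = u @ S1 @ v @ S3 @ x @ S2 @ y \<and>
         w' = u @ rev S1 @ v @ rev S3 @ x @ rev S2 @ y)))"

text \<open>One (classical or virtual) Reidemeister move, or a change of presentation, between
well-formed Gauss diagrams.  Virtual Reidemeister moves do not change the Gauss diagram.\<close>
definition rstep :: "gauss \<Rightarrow> gauss \<Rightarrow> bool" where
  "rstep w w' \<longleftrightarrow> wf_gauss w \<and> wf_gauss w' \<and>
     (rot_step w w' \<or> relabel_step w w' \<or> relabel_step w' w \<or>
      r1_step w w' \<or> r1_step w' w \<or> r2_step w w' \<or> r2_step w' w \<or> r3_step w w')"

text \<open>Forbidden detour move: exchange an adjacent head and tail of different arrows.
(Cyclic adjacency is covered by composing with rotations.)\<close>
definition fd_step :: "gauss \<Rightarrow> gauss \<Rightarrow> bool" where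
  "fd_step w w' \<longleftrightarrow> (\<exists>u v x y. w = u @ [x, y] @ v \<and> w' = u @ [y, x] @ v \<and>
      lab x \<noteq> lab y \<and> is_head x \<noteq> is_head y)"

inductive unknots_with :: "gauss \<Rightarrow> nat \<Rightarrow> bool" where
  zero: "rstep\<^sup>*\<^sup>* w [] \<Longrightarrow> unknots_with w 0"
| step: "rstep\<^sup>*\<^sup>* w u \<Longrightarrow> fd_step u v \<Longrightarrow> unknots_with v n \<Longrightarrow> unknots_with w (Suc n)"

text \<open>Forbidden detour number (of the virtual knot represented by w); infinity if no
unknotting sequence existed.\<close>
definition Fd :: "gauss \<Rightarrow> enat" where
  "Fd w = Inf {enat n | n. unknots_with w n}"

definition endpt_sign :: "endpt \<Rightarrow> int" where
  "endpt_sign e = (if is_head e then sg (positive e) else - sg (positive e))"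

text \<open>The endpoints strictly between the tail P and head Q of arrow a, going from P to Q
along the orientation of the circle.\<close>
definition arc :: "gauss \<Rightarrow> nat \<Rightarrow> gauss" where
  "arc w a = takeWhile (\<lambda>e. \<not> (lab e = a \<and> is_head e))
               (tl (dropWhile (\<lambda>e. \<not> (lab e = a \<and> \<not> is_head e)) (w @ w)))"

definition idx :: "gauss \<Rightarrow> nat \<Rightarrow> int" where
  "idx w a = sum_list (map endpt_sign (arc w a))"

definition arrow_sign :: "gauss \<Rightarrow> nat \<Rightarrow> int" where
  "arrow_sign w a = sg (positive (hd (filter (\<lambda>e. lab e = a) w)))"

definition J :: "gauss \<Rightarrow> int \<Rightarrow> int" where
  "J w n = (\<Sum>a \<in> {a \<in> arrows w. idx w a = n}. arrow_sign w a)"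

definition aff_index_poly :: "gauss \<Rightarrow> int fls" where
  "aff_index_poly w = (\<Sum>n \<in> idx w ` arrows w - {0}.
      fls_const (J w n) * (fls_X_intpow (- n) - 1))"

end

theory Submission
  imports Defs
begin

definition ss :: "gauss \<Rightarrow> int" where "ss w = sum_list (map endpt_sign w)"
definition H :: "gauss \<Rightarrow> endpt \<Rightarrow> int" where "H w e = ss (takeWhile (\<lambda>x. x \<noteq> e) w)"

lemma ss_simps[simp]: "ss [] = 0" "ss (x # w) = endpt_sign x + ss w" "ss (u @ v) = ss u + ss v"
  "ss (rev u) = ss u"
  by (simp_all add: ss_def rev_map[symmetric])

lemma H_Nil[simp]: "H [] e = 0" by (simp add: H_def)
lemma H_Cons[simp]: "H (x # q) e = (if x = e then 0 else endpt_sign x + H q e)"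
  by (simp add: H_def)
lemma H_append: "H (p @ q) e = (if e \<in> set p then H p e else ss p + H q e)"
  by (induction p) auto

lemma wf_mset: "mset w = mset w' \<Longrightarrow> wf_gauss w = wf_gauss w'"
  unfolding wf_gauss_def by (metis mset_filter set_mset_mset)

lemma wf_filter:
  assumes "wf_gauss w" "e \<in> set w"
  shows "mset (filter (\<lambda>x. lab x = lab e) w) = {#Endpt (lab e) False (positive e), Endpt (lab e) True (positive e)#}"
proof -
  obtain s where s: "mset (filter (\<lambda>x. lab x = lab e) w) = {#Endpt (lab e) False s, Endpt (lab e) True s#}"
    using assms unfolding wf_gauss_def by auto
  have "e \<in># mset (filter (\<lambda>x. lab x = lab e) w)" using assms by simp
  hence "positive e = s" unfolding s by (cases e) auto
  thus ?thesis using s by simp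
qed

lemma wf_distinct: assumes "wf_gauss w" shows "distinct w"
proof -
  have "count (mset w) e = (if e \<in> set w then 1 else 0)" for e
  proof (cases "e \<in> set w")
    case True
    have "count (mset w) e = count (mset (filter (\<lambda>x. lab x = lab e) w)) e"
      by (simp add: mset_filter)
    also have "\<dots> \<le> 1" unfolding wf_filter[OF assms True] by (cases e) auto
    finally have "count (mset w) e \<le> 1" .
    moreover have "count (mset w) e > 0" using True by simp
    ultimately have "count (mset w) e = 1" by linarith
    thus ?thesis using True by simp
  qed (metis count_eq_zero_iff in_multiset_in_set)
  thus ?thesis by (simp add: distinct_count_atmost_1)
qed

lemma wf_other: assumes "wf_gauss w" "e \<in> set w" shows "Endpt (lab e) h (positive e) \<in> set w"
proof -
  have "Endpt (lab e) h (positive e) \<in># mset (filter (\<lambda>x. lab x = lab e) w)"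
    unfolding wf_filter[OF assms] by (cases h) auto
  thus ?thesis by simp
qed

lemma wf_unique: assumes "wf_gauss w" "e1 \<in> set w" "e2 \<in> set w" "lab e1 = lab e2" "is_head e1 = is_head e2"
  shows "e1 = e2"
proof -
  have "e2 \<in># mset (filter (\<lambda>x. lab x = lab e1) w)" using assms by simp
  hence "e2 \<in> {Endpt (lab e1) False (positive e1), Endpt (lab e1) True (positive e1)}"
    unfolding wf_filter[OF assms(1,2)] by auto
  thus ?thesis using assms(5) by (cases e1; cases e2) auto
qed

lemma wf_sign: assumes "wf_gauss w" "e \<in> set w" shows "arrow_sign w (lab e) = sg (positive e)"
proof -
  have ne: "filter (\<lambda>x. lab x = lab e) w \<noteq> []" using assms(2) by (auto simp: filter_empty_conv)
  have S: "set (filter (\<lambda>x. lab x = lab e) w) = {Endpt (lab e) False (positive e), Endpt (lab e) True (positive e)}"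
    using arg_cong[OF wf_filter[OF assms], of set_mset] by (simp del: mset_filter)
  have "hd (filter (\<lambda>x. lab x = lab e) w) \<in> set (filter (\<lambda>x. lab x = lab e) w)"
    using ne by (rule hd_in_set)
  hence "hd (filter (\<lambda>x. lab x = lab e) w) \<in> {Endpt (lab e) False (positive e), Endpt (lab e) True (positive e)}"
    unfolding S .
  thus ?thesis unfolding arrow_sign_def by auto
qed

lemma sum_list_group:
  fixes f :: "endpt \<Rightarrow> int"
  assumes "finite A" "lab ` set w \<subseteq> A"
  shows "sum_list (map f w) = (\<Sum>a\<in>A. sum_list (map f (filter (\<lambda>e. lab e = a) w)))"
  using assms(2)
proof (induction w)
  case Nil then show ?case by simp
next
  case (Cons x w)
  have "(\<Sum>a\<in>A. sum_list (map f (filter (\<lambda>e. lab e = a) (x # w))))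
     = (\<Sum>a\<in>A. (if lab x = a then f x else 0) + sum_list (map f (filter (\<lambda>e. lab e = a) w)))"
    by (intro sum.cong) auto
  also have "\<dots> = f x + (\<Sum>a\<in>A. sum_list (map f (filter (\<lambda>e. lab e = a) w)))"
    using Cons.prems assms(1) by (simp add: sum.distrib sum.delta)
  finally show ?case using Cons by simp
qed

lemma wf_ss0: assumes "wf_gauss w" shows "ss w = 0"
proof -
  have "ss w = (\<Sum>a\<in>lab ` set w. sum_list (map endpt_sign (filter (\<lambda>e. lab e = a) w)))"
    unfolding ss_def by (rule sum_list_group) auto
  also have "\<dots> = 0"
  proof (intro sum.neutral ballI)
    fix a assume "a \<in> lab ` set w"
    then obtain e where e: "e \<in> set w" "a = lab e" by auto
    have "sum_list (map endpt_sign (filter (\<lambda>e. lab e = a) w))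
        = sum_mset (image_mset endpt_sign (mset (filter (\<lambda>x. lab x = lab e) w)))"
      unfolding e(2) by (metis mset_map sum_mset_sum_list)
    also have "\<dots> = 0" unfolding wf_filter[OF assms e(1)] by (simp add: endpt_sign_def)
    finally show "sum_list (map endpt_sign (filter (\<lambda>e. lab e = a) w)) = 0" .
  qed
  finally show ?thesis .
qed

lemma dW: "\<forall>x\<in>set u. P x \<Longrightarrow> \<not> P y \<Longrightarrow> dropWhile P (u @ y # z) = y # z"
  by (simp add: dropWhile_append2)
lemma tW: "\<forall>x\<in>set u. P x \<Longrightarrow> \<not> P y \<Longrightarrow> takeWhile P (u @ y # z) = u"
  by (simp add: takeWhile_append2)

lemma idx_formula:
  assumes wf: "wf_gauss w" and T: "Endpt a False s \<in> set w"
  shows "idx w a = H w (Endpt a True s) - H w (Endpt a False s) + sg s"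
proof -
  define T where "T = Endpt a False s"
  define Hd where "Hd = Endpt a True s"
  have Hin: "Hd \<in> set w" using wf_other[OF wf T, of True] by (simp add: Hd_def)
  have d: "distinct w" using wf_distinct[OF wf] .
  have uT: "\<And>e. e \<in> set w \<Longrightarrow> lab e = a \<Longrightarrow> \<not> is_head e \<Longrightarrow> e = T"
    using wf_unique[OF wf _ T] unfolding T_def by auto
  have uH: "\<And>e. e \<in> set w \<Longrightarrow> lab e = a \<Longrightarrow> is_head e \<Longrightarrow> e = Hd"
    using wf_unique[OF wf _ Hin] unfolding Hd_def by auto
  have s0: "ss w = 0" using wf_ss0[OF wf] .
  obtain u r where w: "w = u @ T # r" using T split_list unfolding T_def by metis
  have HT: "Hd \<noteq> T" by (simp add: Hd_def T_def)
  have sT: "endpt_sign T = - sg s" "endpt_sign Hd = sg s" by (simp_all add: T_def Hd_def endpt_sign_def)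
  show ?thesis
  proof (cases "Hd \<in> set r")
    case True
    then obtain v x where r: "r = v @ Hd # x" using split_list by metis
    have nu: "\<forall>e\<in>set u. \<not> (lab e = a \<and> \<not> is_head e)"
      using uT d unfolding w by auto
    have nv: "\<forall>e\<in>set v. \<not> (lab e = a \<and> is_head e)"
      using uH d unfolding w r by auto
    have "arc w a = v"
    proof -
      have "dropWhile (\<lambda>e. \<not> (lab e = a \<and> \<not> is_head e)) (w @ w) = T # (v @ Hd # x @ w)"
        unfolding w r append_assoc append_Cons using nu by (intro dW) (auto simp: T_def)
      moreover have "takeWhile (\<lambda>e. \<not> (lab e = a \<and> is_head e)) (v @ Hd # x @ w) = v"
        using nv by (intro tW) (auto simp: Hd_def)
      ultimately show ?thesis unfolding arc_def by simp
    qed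
    hence "idx w a = ss v" by (simp add: idx_def ss_def)
    moreover have "H w Hd = ss u + endpt_sign T + ss v" "H w T = ss u"
      using d HT unfolding w r by (auto simp: H_append)
    ultimately show ?thesis using sT unfolding T_def Hd_def by simp
  next
    case False
    hence "Hd \<in> set u" using Hin HT w by auto
    then obtain u1 v where u: "u = u1 @ Hd # v" using split_list by metis
    have nu: "\<forall>e\<in>set u1 \<union> set v. \<not> (lab e = a \<and> \<not> is_head e)"
      using uT d unfolding w u by auto
    have nr: "\<forall>e\<in>set r \<union> set u1. \<not> (lab e = a \<and> is_head e)"
      using uH d unfolding w u by auto
    have "arc w a = r @ u1"
    proof -
      have "dropWhile (\<lambda>e. \<not> (lab e = a \<and> \<not> is_head e)) (w @ w) = T # (r @ u1 @ Hd # v @ T # r)"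
      proof -
        have e: "w @ w = (u1 @ Hd # v) @ T # (r @ u1 @ Hd # v @ T # r)" by (simp add: w u)
        show ?thesis unfolding e using nu by (intro dW) (auto simp: T_def Hd_def)
      qed
      moreover have "takeWhile (\<lambda>e. \<not> (lab e = a \<and> is_head e)) (r @ u1 @ Hd # v @ T # r) = r @ u1"
        using nr unfolding append_assoc[symmetric] by (intro tW) (auto simp: Hd_def)
      ultimately show ?thesis unfolding arc_def by simp
    qed
    hence "idx w a = ss r + ss u1" by (simp add: idx_def ss_def)
    moreover have "H w Hd = ss u1" "H w T = ss u1 + endpt_sign Hd + ss v"
      using d HT unfolding w u by (auto simp: H_append)
    moreover have "ss u1 + endpt_sign Hd + ss v + endpt_sign T + ss r = 0" using s0 unfolding w u by simp
    ultimately show ?thesis using sT unfolding T_def Hd_def by simp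
  qed
qed


definition tm :: "gauss \<Rightarrow> nat \<Rightarrow> int \<Rightarrow> int" where
  "tm w a k = arrow_sign w a * ((if k = - idx w a then 1 else 0) - (if k = 0 then 1 else 0))"

definition cf :: "gauss \<Rightarrow> int \<Rightarrow> int" where
  "cf w k = (\<Sum>a\<in>arrows w. tm w a k)"

lemma finite_arrows[simp]: "finite (arrows w)"
  by (simp add: arrows_def)

lemma arrow_tail: assumes "wf_gauss w" "a \<in> arrows w" obtains s where "Endpt a False s \<in> set w"
proof -
  obtain e where "e \<in> set w" "a = lab e" using assms(2) by (auto simp: arrows_def)
  thus ?thesis using wf_other[OF assms(1), of e False] that by auto
qed

lemma tm_eq:
  assumes "wf_gauss w" "wf_gauss w'" "Endpt a False s \<in> set w" "Endpt a False s \<in> set w'"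
    "H w' (Endpt a True s) - H w' (Endpt a False s) = H w (Endpt a True s) - H w (Endpt a False s)"
  shows "tm w' a k = tm w a k"
proof -
  have "arrow_sign w a = arrow_sign w' a" using wf_sign[OF assms(1,3)] wf_sign[OF assms(2,4)] by simp
  moreover have "idx w a = idx w' a" using idx_formula[OF assms(1,3)] idx_formula[OF assms(2,4)] assms(5) by simp
  ultimately show ?thesis unfolding tm_def by simp
qed

lemma tm_eq2:
  assumes "wf_gauss w" "wf_gauss w'" "b \<in> arrows w'" "\<And>e. lab e = b \<Longrightarrow> e \<in> set w' \<Longrightarrow> e \<in> set w"
    "\<And>e. lab e = b \<Longrightarrow> e \<in> set w' \<Longrightarrow> H w e = H w' e"
  shows "tm w b k = tm w' b k"
proof -
  obtain s where s: "Endpt b False s \<in> set w'" using arrow_tail[OF assms(2,3)] by metis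
  have h: "Endpt b True s \<in> set w'" using wf_other[OF assms(2) s, of True] by simp
  show ?thesis by (rule tm_eq[OF assms(2,1) s assms(4)[OF _ s]]) (use assms(5) s h in auto)
qed

lemma H_mid: "e \<notin> set m \<Longrightarrow> ss m = 0 \<Longrightarrow> H (u @ m @ v) e = H (u @ v) e"
  by (simp add: H_append)

lemma rot_cf: assumes "wf_gauss w" "wf_gauss w'" "rot_step w w'" shows "cf w' k = cf w k"
proof -
  obtain u v where uv: "w = u @ v" "w' = v @ u" using assms(3) rot_step_def by auto
  have d: "distinct w" using wf_distinct[OF assms(1)] .
  have s0: "ss u + ss v = 0" using wf_ss0[OF assms(1)] uv by simp
  have HH: "H w' e = H w e + ss v" if "e \<in> set w" for e
    using that d s0 unfolding uv by (auto simp: H_append)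
  have ar: "arrows w' = arrows w" unfolding arrows_def uv by auto
  show ?thesis unfolding cf_def ar
  proof (intro sum.cong refl)
    fix a assume "a \<in> arrows w"
    then obtain s where s: "Endpt a False s \<in> set w" using arrow_tail[OF assms(1)] by metis
    have h: "Endpt a True s \<in> set w" using wf_other[OF assms(1) s, of True] by simp
    have s': "Endpt a False s \<in> set w'" using s uv by auto
    show "tm w' a k = tm w a k" by (rule tm_eq[OF assms(1,2) s s']) (simp add: HH s h)
  qed
qed

lemma relabel_cf: assumes "relabel_step w w'" shows "cf w' k = cf w k"
proof -
  obtain f where f: "inj f" and w': "w' = map (\<lambda>e. Endpt (f (lab e)) (is_head e) (positive e)) w"
    using assms relabel_step_def by auto
  define g where "g = (\<lambda>e. Endpt (f (lab e)) (is_head e) (positive e))"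
  have w'g: "w' = map g w" using w' g_def by simp
  have lg: "lab \<circ> g = f \<circ> lab" by (auto simp: g_def)
  have ar: "arrows w' = f ` arrows w" unfolding arrows_def w'g set_map image_comp lg by (simp only: image_comp)
  have tmf: "tm w' (f a) k = tm w a k" for a
  proof -
    have P: "(\<lambda>e. lab e = f a) \<circ> g = (\<lambda>e. lab e = a)" by (rule ext) (simp add: g_def inj_eq[OF f])
    have "arrow_sign w' (f a) = arrow_sign w a"
      unfolding arrow_sign_def w'g filter_map P
      by (cases "filter (\<lambda>e. lab e = a) w") (auto simp: g_def)
    moreover have "arc w' (f a) = map g (arc w a)"
    proof -
      have P1: "(\<lambda>e. \<not> (lab e = f a \<and> \<not> is_head e)) \<circ> g = (\<lambda>e. \<not> (lab e = a \<and> \<not> is_head e))"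
        by (rule ext) (simp add: g_def inj_eq[OF f])
      have P2: "(\<lambda>e. \<not> (lab e = f a \<and> is_head e)) \<circ> g = (\<lambda>e. \<not> (lab e = a \<and> is_head e))"
        by (rule ext) (simp add: g_def inj_eq[OF f])
      show ?thesis unfolding arc_def w'g map_append[symmetric] dropWhile_map P1 map_tl[symmetric] takeWhile_map P2 ..
    qed
    moreover have "endpt_sign \<circ> g = endpt_sign" by (auto simp: g_def endpt_sign_def)
    ultimately show ?thesis unfolding tm_def idx_def by simp
  qed
  have "inj_on f (arrows w)" using f by (metis inj_on_subset subset_UNIV)
  hence "sum (\<lambda>a. tm w' a k) (f ` arrows w) = sum ((\<lambda>a. tm w' a k) \<circ> f) (arrows w)"
    by (rule sum.reindex)
  thus ?thesis unfolding cf_def ar by (simp add: comp_def tmf)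
qed


lemma sum_others:
  assumes "\<And>b. b \<in> arrows w' \<Longrightarrow> tm w b k = tm w' b k"
  shows "(\<Sum>b\<in>arrows w'. tm w b k) = cf w' k"
  unfolding cf_def using assms by (intro sum.cong) auto

lemma r1_cf: assumes wf: "wf_gauss w" "wf_gauss w'" and st: "r1_step w w'" shows "cf w' k = cf w k"
proof -
  obtain u v a h s where w: "w = u @ [Endpt a h s, Endpt a (\<not> h) s] @ v" and w': "w' = u @ v"
    using st r1_step_def by blast
  define A where "A = Endpt a h s"
  define B where "B = Endpt a (\<not> h) s"
  have w2: "w = u @ [A, B] @ v" using w A_def B_def by simp
  have d: "distinct w" using wf_distinct[OF wf(1)] .
  have nm: "A \<notin> set u" "B \<notin> set u" "A \<notin> set v" "B \<notin> set v" "A \<noteq> B" using d unfolding w2 by auto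
  have Ain: "A \<in> set w" "B \<in> set w" unfolding w2 by auto
  have noa: "lab e \<noteq> a" if "e \<in> set w'" for e
  proof
    assume l: "lab e = a"
    have ew: "e \<in> set w" using that unfolding w' w2 by auto
    have "e = A \<or> e = B"
      using wf_unique[OF wf(1) ew Ain(1)] wf_unique[OF wf(1) ew Ain(2)] l by (cases "is_head e = h") (auto simp: A_def B_def)
    thus False using that nm unfolding w' by auto
  qed
  have ar: "arrows w = insert a (arrows w')" "a \<notin> arrows w'"
    using noa unfolding arrows_def w' w2 by (auto simp: A_def B_def)
  have "tm w a k = 0"
  proof -
    have T: "Endpt a False s \<in> set w" using Ain by (cases h) (auto simp: A_def B_def)
    have "H w A = ss u" "H w B = ss u + endpt_sign A" using nm unfolding w2 by (auto simp: H_append)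
    hence "idx w a = 0" using idx_formula[OF wf(1) T]
      by (cases h) (auto simp: A_def B_def endpt_sign_def)
    thus ?thesis by (simp add: tm_def)
  qed
  moreover have "(\<Sum>b\<in>arrows w'. tm w b k) = cf w' k"
  proof (rule sum_others, rule tm_eq2[OF wf])
    fix b e assume b: "b \<in> arrows w'" and e: "lab e = b" "e \<in> set w'"
    show "e \<in> set w" using e unfolding w' w2 by auto
    have "e \<noteq> A" "e \<noteq> B" using noa[OF e(2)] by (auto simp: A_def B_def)
    thus "H w e = H w' e" unfolding w2 w' by (intro H_mid) (auto simp: A_def B_def endpt_sign_def)
  qed
  ultimately show ?thesis unfolding cf_def ar(1) using ar(2) by simp
qed

lemma r2_cf: assumes wf: "wf_gauss w" "wf_gauss w'" and st: "r2_step w w'" shows "cf w' k = cf w k"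
proof -
  obtain u v x a b s hb where w: "w = u @ [Endpt a False s, Endpt b False (\<not> s)] @ v @
          (if hb then [Endpt a True s, Endpt b True (\<not> s)]
                 else [Endpt b True (\<not> s), Endpt a True s]) @ x" and w': "w' = u @ v @ x"
    using st r2_step_def by blast
  define TA where "TA = Endpt a False s"
  define TB where "TB = Endpt b False (\<not> s)"
  define HA where "HA = Endpt a True s"
  define HB where "HB = Endpt b True (\<not> s)"
  define HH where "HH = (if hb then [HA, HB] else [HB, HA])"
  have w2: "w = u @ [TA, TB] @ v @ HH @ x" using w by (simp add: TA_def TB_def HA_def HB_def HH_def)
  have d: "distinct w" using wf_distinct[OF wf(1)] .
  have sHH: "set HH = {HA, HB}" by (auto simp: HH_def)
  have inw: "TA \<in> set w" "TB \<in> set w" "HA \<in> set w" "HB \<in> set w" using sHH unfolding w2 by auto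
  have ab: "a \<noteq> b"
  proof
    assume "a = b"
    hence "TA = TB" using wf_unique[OF wf(1) inw(1,2)] by (simp add: TA_def TB_def)
    thus False by (simp add: TA_def TB_def)
  qed
  have nm: "TA \<notin> set u" "TB \<notin> set u" "HA \<notin> set u" "HB \<notin> set u" "HA \<notin> set v" "HB \<notin> set v"
    "TA \<notin> set v" "TB \<notin> set v" "TA \<notin> set x" "TB \<notin> set x" "HA \<notin> set x" "HB \<notin> set x"
    using d sHH unfolding w2 by auto
  have neq: "TA \<noteq> TB" "HA \<noteq> HB" "TA \<noteq> HA" "TA \<noteq> HB" "TB \<noteq> HA" "TB \<noteq> HB"
    using ab by (auto simp: TA_def TB_def HA_def HB_def)
  have noab: "lab e \<noteq> a \<and> lab e \<noteq> b" if "e \<in> set w'" for e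
  proof -
    have ew: "e \<in> set w" using that unfolding w' w2 by auto
    have "lab e = a \<Longrightarrow> e = TA \<or> e = HA"
      using wf_unique[OF wf(1) ew inw(1)] wf_unique[OF wf(1) ew inw(3)] by (cases "is_head e") (auto simp: TA_def HA_def)
    moreover have "lab e = b \<Longrightarrow> e = TB \<or> e = HB"
      using wf_unique[OF wf(1) ew inw(2)] wf_unique[OF wf(1) ew inw(4)] by (cases "is_head e") (auto simp: TB_def HB_def)
    ultimately show ?thesis using that nm unfolding w' by auto
  qed
  have ar: "arrows w = insert a (insert b (arrows w'))" "a \<notin> arrows w'" "b \<notin> arrows w'"
    using noab sHH unfolding arrows_def w' w2 by (auto simp: TA_def TB_def HA_def HB_def)
  have sg: "endpt_sign TA = - sg s" "endpt_sign TB = sg s" "endpt_sign HA = sg s" "endpt_sign HB = - sg s"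
    by (auto simp: TA_def TB_def HA_def HB_def endpt_sign_def sg_def)
  have "tm w a k + tm w b k = 0"
  proof -
    have HT: "H w TA = ss u" "H w TB = ss u - sg s" using nm neq sg unfolding w2 by (auto simp: H_append)
    have HHs: "H w HA = ss u + ss v + (if hb then 0 else - sg s)" "H w HB = ss u + ss v + (if hb then sg s else 0)"
      using nm neq sg unfolding w2 by (auto simp: H_append HH_def)
    have "idx w a = idx w b"
      using idx_formula[OF wf(1) inw(1)[unfolded TA_def]] idx_formula[OF wf(1) inw(2)[unfolded TB_def]]
        HT HHs unfolding TA_def TB_def HA_def HB_def by (auto simp: sg_def)
    moreover have "arrow_sign w a = sg s" "arrow_sign w b = - sg s"
      using wf_sign[OF wf(1) inw(1)] wf_sign[OF wf(1) inw(2)] by (auto simp: TA_def TB_def sg_def)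
    ultimately show ?thesis unfolding tm_def by simp
  qed
  moreover have "(\<Sum>c\<in>arrows w'. tm w c k) = cf w' k"
  proof (rule sum_others, rule tm_eq2[OF wf])
    fix c e assume c: "c \<in> arrows w'" and e: "lab e = c" "e \<in> set w'"
    show "e \<in> set w" using e unfolding w' w2 by auto
    have ne: "e \<noteq> TA" "e \<noteq> TB" "e \<noteq> HA" "e \<noteq> HB" using noab[OF e(2)] by (auto simp: TA_def TB_def HA_def HB_def)
    have "H w e = H (u @ v @ HH @ x) e" unfolding w2 using ne sg by (intro H_mid) auto
    also have "\<dots> = H (u @ v @ x) e" using H_mid[of e HH "u @ v" x] ne sg sHH by (simp add: HH_def)
    finally show "H w e = H w' e" unfolding w' .
  qed
  ultimately show ?thesis unfolding cf_def ar(1) using ar(2,3) ab by (simp add: add.assoc[symmetric])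
qed


fun Dl :: "gauss \<Rightarrow> endpt \<Rightarrow> int" where
  "Dl [X, Y] e = (if e = X then endpt_sign Y else if e = Y then - endpt_sign X else 0)"
| "Dl _ e = 0"

lemma Dl_notin: "e \<notin> set S \<Longrightarrow> Dl S e = 0"
  by (cases "(S, e)" rule: Dl.cases) auto

lemma rev2:
  assumes "distinct (p @ S @ q)" "length S = 2"
  shows "H (p @ rev S @ q) e = H (p @ S @ q) e + Dl S e"
proof -
  obtain X Y where S: "S = [X, Y]" using assms(2)
    by (auto simp: numeral_2_eq_2 length_Suc_conv)
  show ?thesis using assms(1) unfolding S by (cases "e \<in> set p") (auto simp: H_append)
qed

lemma three_rev:
  assumes d: "distinct (u @ S1 @ v @ S2 @ x @ S3 @ y)" and l: "length S1 = 2" "length S2 = 2" "length S3 = 2"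
  shows "H (u @ rev S1 @ v @ rev S2 @ x @ rev S3 @ y) e = H (u @ S1 @ v @ S2 @ x @ S3 @ y) e + Dl S1 e + Dl S2 e + Dl S3 e"
proof -
  have m: "mset (u @ rev S1 @ v @ S2 @ x @ S3 @ y) = mset (u @ S1 @ v @ S2 @ x @ S3 @ y)"
    "mset (u @ rev S1 @ v @ rev S2 @ x @ S3 @ y) = mset (u @ S1 @ v @ S2 @ x @ S3 @ y)" by simp_all
  have d1: "distinct (u @ rev S1 @ v @ S2 @ x @ S3 @ y)" using d m(1) by (metis mset_eq_imp_distinct_iff)
  have d2: "distinct (u @ rev S1 @ v @ rev S2 @ x @ S3 @ y)" using d m(2) by (metis mset_eq_imp_distinct_iff)
  have "H (u @ rev S1 @ v @ rev S2 @ x @ rev S3 @ y) e = H ((u @ rev S1 @ v @ rev S2 @ x) @ rev S3 @ y) e" by simp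
  also have "\<dots> = H ((u @ rev S1 @ v @ rev S2 @ x) @ S3 @ y) e + Dl S3 e"
    by (rule rev2) (use d2 l in simp_all)
  also have "H ((u @ rev S1 @ v @ rev S2 @ x) @ S3 @ y) e = H ((u @ rev S1 @ v) @ rev S2 @ (x @ S3 @ y)) e" by simp
  also have "\<dots> = H ((u @ rev S1 @ v) @ S2 @ (x @ S3 @ y)) e + Dl S2 e"
    by (rule rev2) (use d1 l in simp_all)
  also have "H ((u @ rev S1 @ v) @ S2 @ (x @ S3 @ y)) e = H (u @ rev S1 @ (v @ S2 @ x @ S3 @ y)) e" by simp
  also have "\<dots> = H (u @ S1 @ (v @ S2 @ x @ S3 @ y)) e + Dl S1 e"
    by (rule rev2) (use d l in simp_all)
  finally show ?thesis by simp
qed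

lemma sg_cases: "sg b = 1 \<or> sg b = -1" by (simp add: sg_def)

lemma r3_core: assumes wf: "wf_gauss w" "wf_gauss w'" and ok: "r3_ok o1 o2 o3 ea eb ec" and
    V: "(w = u @ seg1 o1 a b ea eb @ v @ seg2 o2 a c ea ec @ x @ seg3 o3 b c eb ec @ y \<and>
         w' = u @ rev (seg1 o1 a b ea eb) @ v @ rev (seg2 o2 a c ea ec) @ x @ rev (seg3 o3 b c eb ec) @ y) \<or>
        (w = u @ seg1 o1 a b ea eb @ v @ seg3 o3 b c eb ec @ x @ seg2 o2 a c ea ec @ y \<and>
         w' = u @ rev (seg1 o1 a b ea eb) @ v @ rev (seg3 o3 b c eb ec) @ x @ rev (seg2 o2 a c ea ec) @ y)"
  shows "cf w' k = cf w k"
proof -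
  define S1 where "S1 = seg1 o1 a b ea eb"
  define S2 where "S2 = seg2 o2 a c ea ec"
  define S3 where "S3 = seg3 o3 b c eb ec"
  have V': "(w = u @ S1 @ v @ S2 @ x @ S3 @ y \<and> w' = u @ rev S1 @ v @ rev S2 @ x @ rev S3 @ y) \<or>
        (w = u @ S1 @ v @ S3 @ x @ S2 @ y \<and> w' = u @ rev S1 @ v @ rev S3 @ x @ rev S2 @ y)"
    using V by (simp only: S1_def S2_def S3_def)
  have l: "length S1 = 2" "length S2 = 2" "length S3 = 2"
    by (simp_all add: S1_def S2_def S3_def seg1_def seg2_def seg3_def)
  have d: "distinct w" using wf_distinct[OF wf(1)] .
  have F: "(\<forall>e. H w' e = H w e + Dl S1 e + Dl S2 e + Dl S3 e) \<and> set w' = set w \<and>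
     distinct (S1 @ S2 @ S3) \<and> set S1 \<subseteq> set w \<and> set S2 \<subseteq> set w \<and> set S3 \<subseteq> set w"
    using V'
  proof (elim disjE conjE)
    assume w: "w = u @ S1 @ v @ S2 @ x @ S3 @ y" and w': "w' = u @ rev S1 @ v @ rev S2 @ x @ rev S3 @ y"
    have "H w' e = H w e + Dl S1 e + Dl S2 e + Dl S3 e" for e
      unfolding w w' by (rule three_rev[OF d[unfolded w] l])
    moreover have "distinct (S1 @ S2 @ S3)" using d unfolding w by auto
    ultimately show ?thesis unfolding w w' by auto
  next
    assume w: "w = u @ S1 @ v @ S3 @ x @ S2 @ y" and w': "w' = u @ rev S1 @ v @ rev S3 @ x @ rev S2 @ y"
    have "H w' e = H w e + Dl S1 e + Dl S3 e + Dl S2 e" for e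
      unfolding w w' by (rule three_rev[OF d[unfolded w] l(1,3,2)])
    moreover have "distinct (S1 @ S2 @ S3)" using d unfolding w by auto
    ultimately show ?thesis unfolding w w' by (auto simp: algebra_simps)
  qed
  have HD: "H w' e = H w e + Dl S1 e + Dl S2 e + Dl S3 e" for e using F by blast
  have setw: "set w' = set w" and d3: "distinct (S1 @ S2 @ S3)" and inw: "set S1 \<subseteq> set w" "set S2 \<subseteq> set w" "set S3 \<subseteq> set w"
    using F by blast+
  have sets: "set S1 = {Endpt a False ea, Endpt b False eb}" "set S2 = {Endpt a True ea, Endpt c False ec}"
    "set S3 = {Endpt b True eb, Endpt c True ec}"
    by (auto simp: S1_def S2_def S3_def seg1_def seg2_def seg3_def)
  have mem: "Endpt a False ea \<in> set w" "Endpt b False eb \<in> set w" "Endpt c False ec \<in> set w"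
     "Endpt a True ea \<in> set w" "Endpt b True eb \<in> set w" "Endpt c True ec \<in> set w"
    using inw sets by auto
  have ab: "a \<noteq> b"
  proof
    assume "a = b"
    hence "Endpt a False ea = Endpt b False eb"
      by (intro wf_unique[OF wf(1) mem(1,2)]) auto
    moreover have "Endpt a False ea \<noteq> Endpt b False eb"
      using d3 unfolding S1_def seg1_def by (auto split: if_splits)
    ultimately show False by simp
  qed
  have ac: "a \<noteq> c"
  proof
    assume "a = c"
    hence "Endpt a False ea = Endpt c False ec"
      by (intro wf_unique[OF wf(1) mem(1,3)]) auto
    moreover have "Endpt a False ea \<in> set S1" "Endpt c False ec \<in> set S2" using sets by auto
    ultimately show False using d3 by auto
  qed
  have bc: "b \<noteq> c"
  proof
    assume "b = c"
    hence "Endpt b False eb = Endpt c False ec"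
      by (intro wf_unique[OF wf(1) mem(2,3)]) auto
    moreover have "Endpt b False eb \<in> set S1" "Endpt c False ec \<in> set S2" using sets by auto
    ultimately show False using d3 by auto
  qed
  have ok': "sg o1 * sg eb = sg o2 * sg ec" "sg o3 * sg ea = sg o1 * sg ec"
    "sg o3 * sg eb = sg o2 * sg ea" using ok
    by (cases o1; cases o2; cases o3; cases ea; cases eb; cases ec; simp add: r3_ok_def sg_def)+
  have keyz: "tm w' z k = tm w z k" if zs: "Endpt z False s \<in> set w" and
    eq: "Dl S1 (Endpt z True s) + Dl S2 (Endpt z True s) + Dl S3 (Endpt z True s)
        = Dl S1 (Endpt z False s) + Dl S2 (Endpt z False s) + Dl S3 (Endpt z False s)" for z s
    using eq by (intro tm_eq[OF wf zs]) (auto simp: setw zs HD)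
  have sgT: "sg True = 1" "sg False = -1" by (simp_all add: sg_def)
  have ka: "tm w' a k = tm w a k"
    by (rule keyz[OF mem(1)]) (cases o1; cases o2; cases o3; use ab ac bc ok' in \<open>simp add: S1_def S2_def S3_def seg1_def seg2_def seg3_def endpt_sign_def sgT\<close>)
  have kb: "tm w' b k = tm w b k"
    by (rule keyz[OF mem(2)]) (cases o1; cases o2; cases o3; use ab ac bc ok' in \<open>simp add: S1_def S2_def S3_def seg1_def seg2_def seg3_def endpt_sign_def sgT\<close>)
  have kc: "tm w' c k = tm w c k"
    by (rule keyz[OF mem(3)]) (cases o1; cases o2; cases o3; use ab ac bc ok' in \<open>simp add: S1_def S2_def S3_def seg1_def seg2_def seg3_def endpt_sign_def sgT\<close>)
  have other: "tm w' z k = tm w z k" if z: "z \<in> arrows w" "z \<notin> {a, b, c}" for z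
  proof (rule tm_eq2[OF wf(2,1)])
    show "z \<in> arrows w" by fact
    fix e assume e: "lab e = z" "e \<in> set w"
    have "e \<notin> set S1" "e \<notin> set S2" "e \<notin> set S3" using z e(1) unfolding sets by auto
    hence "Dl S1 e = 0" "Dl S2 e = 0" "Dl S3 e = 0" by (simp_all add: Dl_notin)
    thus "H w' e = H w e" using HD[of e] by simp
    show "e \<in> set w'" using e setw by simp
  qed
  have ar: "arrows w' = arrows w" by (simp add: arrows_def setw)
  show ?thesis unfolding cf_def ar using ka kb kc other by (intro sum.cong) auto
qed

lemma r3_cf: assumes wf: "wf_gauss w" "wf_gauss w'" and st: "r3_step w w'" shows "cf w' k = cf w k"
  using st unfolding r3_step_def Let_def
  apply (elim exE conjE)
  apply (rule r3_core[OF wf])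
   apply assumption
  apply assumption
  done


lemma rstep_cf: assumes "rstep w w'" shows "cf w' k = cf w k"
proof -
  have wf: "wf_gauss w" "wf_gauss w'" using assms rstep_def by auto
  from assms have "rot_step w w' \<or> relabel_step w w' \<or> relabel_step w' w \<or>
      r1_step w w' \<or> r1_step w' w \<or> r2_step w w' \<or> r2_step w' w \<or> r3_step w w'"
    unfolding rstep_def by blast
  thus ?thesis
  proof (elim disjE)
    assume "rot_step w w'" thus ?thesis by (rule rot_cf[OF wf])
  next
    assume "relabel_step w w'" thus ?thesis by (rule relabel_cf)
  next
    assume "relabel_step w' w" thus ?thesis by (rule relabel_cf[symmetric])
  next
    assume "r1_step w w'" thus ?thesis by (rule r1_cf[OF wf])
  next
    assume "r1_step w' w" thus ?thesis by (rule r1_cf[OF wf(2,1), symmetric])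
  next
    assume "r2_step w w'" thus ?thesis by (rule r2_cf[OF wf])
  next
    assume "r2_step w' w" thus ?thesis by (rule r2_cf[OF wf(2,1), symmetric])
  next
    assume "r3_step w w'" thus ?thesis by (rule r3_cf[OF wf])
  qed
qed

lemma rsteps_cf: assumes "rstep\<^sup>*\<^sup>* w u" "wf_gauss w" shows "wf_gauss u \<and> cf u = cf w"
  using assms(1)
proof (induction rule: rtranclp_induct)
  case base then show ?case using assms(2) by simp
next
  case (step y z)
  then show ?case using rstep_cf[OF step(2)] rstep_def by auto
qed

lemma cf_Nil: "cf [] k = 0" by (simp add: cf_def arrows_def)

lemma sg_abs: "\<bar>sg b\<bar> = 1" by (simp add: sg_def)

lemma tm_shift:
  assumes "arrow_sign v z = arrow_sign u z" "idx v z = idx u z + d" "d = 1 \<or> d = -1" "\<bar>arrow_sign u z\<bar> = 1"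
  shows "\<exists>m e. \<bar>e\<bar> \<le> 1 \<and> (\<forall>k. tm v z k = tm u z k + e * (if k - 1 = m then 1 else 0) - e * (if k = m then 1 else 0))"
proof -
  let ?s = "arrow_sign u z" and ?i = "idx u z"
  from assms(3) show ?thesis
  proof
    assume d: "d = 1"
    show ?thesis
      by (rule exI[of _ "- ?i - 1"], rule exI[of _ "- ?s"]) (use assms d in \<open>auto simp: tm_def\<close>)
  next
    assume d: "d = -1"
    show ?thesis
      by (rule exI[of _ "- ?i"], rule exI[of _ "?s"]) (use assms d in \<open>auto simp: tm_def\<close>)
  qed
qed

lemma sum2: "finite A \<Longrightarrow> x \<in> A \<Longrightarrow> y \<in> A \<Longrightarrow> x \<noteq> y \<Longrightarrow>
  sum f A = f x + f y + sum f (A - {x, y})"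
proof -
  assume a: "finite A" "x \<in> A" "y \<in> A" "x \<noteq> y"
  have "sum f A = f x + sum f (A - {x})" using a by (simp add: sum.remove)
  also have "sum f (A - {x}) = f y + sum f (A - {x} - {y})" using a by (intro sum.remove) auto
  also have "A - {x} - {y} = A - {x, y}" by auto
  finally show ?thesis by (simp add: add.assoc)
qed

lemma fd_cf:
  assumes fd: "fd_step u v" and wf: "wf_gauss u"
  shows "wf_gauss v \<and> (\<exists>m1 e1 m2 e2. \<bar>e1\<bar> \<le> 1 \<and> \<bar>e2\<bar> \<le> 1 \<and> (\<forall>k. cf v k = cf u k
     + (e1 * (if k - 1 = m1 then 1 else 0) - e1 * (if k = m1 then 1 else 0))
     + (e2 * (if k - 1 = m2 then 1 else 0) - e2 * (if k = m2 then 1 else 0))))"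
proof -
  obtain p q X Y where u: "u = p @ [X, Y] @ q" and v: "v = p @ [Y, X] @ q" and
    lXY: "lab X \<noteq> lab Y" and hXY: "is_head X \<noteq> is_head Y"
    using fd fd_step_def by blast
  have wfv: "wf_gauss v" using wf wf_mset[of u v] unfolding u v by simp
  have d: "distinct u" using wf_distinct[OF wf] .
  have HD: "H v e = H u e + Dl [X, Y] e" for e
    using rev2[of p "[X,Y]" q e] d unfolding u v by simp
  have setv: "set v = set u" unfolding u v by auto
  have ar: "arrows v = arrows u" by (simp add: arrows_def setv)
  have Xin: "X \<in> set u" and Yin: "Y \<in> set u" unfolding u by auto
  have XY: "X \<noteq> Y" using lXY by auto
  have shift: "\<exists>m e. \<bar>e\<bar> \<le> 1 \<and> (\<forall>k. tm v (lab Z) k = tm u (lab Z) k + e * (if k - 1 = m then 1 else 0) - e * (if k = m then 1 else 0))"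
    if Z: "Z \<in> {X, Y}" for Z
  proof -
    have Zin: "Z \<in> set u" using Z Xin Yin by auto
    define T where "T = Endpt (lab Z) False (positive Z)"
    define Hh where "Hh = Endpt (lab Z) True (positive Z)"
    have Tin: "T \<in> set u" "Hh \<in> set u" using wf_other[OF wf Zin] by (simp_all add: T_def Hh_def)
    have Tin': "T \<in> set v" using Tin setv by simp
    have sgn: "arrow_sign v (lab Z) = arrow_sign u (lab Z)"
      using wf_sign[OF wf Zin] wf_sign[OF wfv, of Z] Zin setv by simp
    have ZTH: "Z = T \<or> Z = Hh" unfolding T_def Hh_def by (cases Z) auto
    have idxu: "idx u (lab Z) = H u Hh - H u T + sg (positive Z)"
      using idx_formula[OF wf Tin(1)[unfolded T_def]] by (simp add: T_def Hh_def)
    have idxv: "idx v (lab Z) = H v Hh - H v T + sg (positive Z)"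
      using idx_formula[OF wfv Tin'[unfolded T_def]] by (simp add: T_def Hh_def)
    have es: "endpt_sign e = 1 \<or> endpt_sign e = -1" for e by (simp add: endpt_sign_def sg_def)
    have DZ: "Dl [X, Y] Z = 1 \<or> Dl [X, Y] Z = -1" using Z XY es[of X] es[of Y] by auto
    have other0: "Dl [X, Y] W = 0" if "lab W = lab Z" "is_head W \<noteq> is_head Z" for W
    proof (rule Dl_notin)
      have "W \<noteq> Z" using that by auto
      moreover have "W \<noteq> X" if "Z = Y" using that \<open>lab W = lab Z\<close> lXY by auto
      moreover have "W \<noteq> Y" if "Z = X" using that \<open>lab W = lab Z\<close> lXY by auto
      ultimately show "W \<notin> set [X, Y]" using Z by auto
    qed
    have dd: "Dl [X, Y] Hh - Dl [X, Y] T = 1 \<or> Dl [X, Y] Hh - Dl [X, Y] T = -1"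
    proof (cases "is_head Z")
      case True
      hence "Hh = Z" unfolding Hh_def by (cases Z) simp
      moreover have "Dl [X, Y] T = 0" using True by (intro other0) (auto simp: T_def)
      ultimately have "Dl [X, Y] Hh - Dl [X, Y] T = Dl [X, Y] Z" by (simp del: Dl.simps)
      thus ?thesis using DZ by linarith
    next
      case False
      hence "T = Z" unfolding T_def by (cases Z) simp
      moreover have "Dl [X, Y] Hh = 0" using False by (intro other0) (auto simp: Hh_def)
      ultimately have "Dl [X, Y] Hh - Dl [X, Y] T = - Dl [X, Y] Z" by (simp del: Dl.simps)
      thus ?thesis using DZ by linarith
    qed
    show ?thesis
      by (rule tm_shift[OF sgn _ dd]) (simp_all add: idxu idxv HD wf_sign[OF wf Zin] sg_abs)
  qed
  obtain m1 e1 where s1: "\<bar>e1\<bar> \<le> 1" "\<forall>k. tm v (lab X) k = tm u (lab X) k + e1 * (if k - 1 = m1 then 1 else 0) - e1 * (if k = m1 then 1 else 0)"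
    using shift[of X] by auto
  obtain m2 e2 where s2: "\<bar>e2\<bar> \<le> 1" "\<forall>k. tm v (lab Y) k = tm u (lab Y) k + e2 * (if k - 1 = m2 then 1 else 0) - e2 * (if k = m2 then 1 else 0)"
    using shift[of Y] by auto
  have rest: "tm v z k = tm u z k" if "z \<in> arrows u - {lab X, lab Y}" for z k
  proof (rule tm_eq2[OF wfv wf])
    show "z \<in> arrows u" using that by simp
    fix e assume e: "lab e = z" "e \<in> set u"
    show "e \<in> set v" using e setv by simp
    have "e \<noteq> X" "e \<noteq> Y" using e that by auto
    thus "H v e = H u e" by (simp add: HD)
  qed
  have labin: "lab X \<in> arrows u" "lab Y \<in> arrows u" using Xin Yin by (auto simp: arrows_def)
  have "cf v k = cf u k
     + (e1 * (if k - 1 = m1 then 1 else 0) - e1 * (if k = m1 then 1 else 0))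
     + (e2 * (if k - 1 = m2 then 1 else 0) - e2 * (if k = m2 then 1 else 0))" for k
  proof -
    have "cf v k = tm v (lab X) k + tm v (lab Y) k + (\<Sum>z\<in>arrows u - {lab X, lab Y}. tm v z k)"
      unfolding cf_def ar by (rule sum2[OF _ labin lXY]) simp
    also have "(\<Sum>z\<in>arrows u - {lab X, lab Y}. tm v z k) = (\<Sum>z\<in>arrows u - {lab X, lab Y}. tm u z k)"
      using rest by (intro sum.cong) auto
    also have "cf u k = tm u (lab X) k + tm u (lab Y) k + (\<Sum>z\<in>arrows u - {lab X, lab Y}. tm u z k)"
      unfolding cf_def by (rule sum2[OF _ labin lXY]) simp
    ultimately show ?thesis using s1 s2 by simp
  qed
  thus ?thesis using wfv s1(1) s2(1) by blast
qed


lemma aff_nth: "fls_nth (aff_index_poly w) k = cf w k"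
proof -
  let ?g = "\<lambda>n. (if k = - n then 1 else 0) - (if k = 0 then 1 else (0::int))"
  have "fls_nth (aff_index_poly w) k = (\<Sum>n \<in> idx w ` arrows w - {0}. J w n * ?g n)"
    unfolding aff_index_poly_def fls_nth_sum by (intro sum.cong) auto
  also have "\<dots> = (\<Sum>n \<in> idx w ` arrows w. J w n * ?g n)"
    by (intro sum.mono_neutral_left) auto
  also have "\<dots> = (\<Sum>n \<in> idx w ` arrows w. \<Sum>a\<in>{a \<in> arrows w. idx w a = n}. arrow_sign w a * ?g (idx w a))"
    unfolding J_def sum_distrib_right by (intro sum.cong) auto
  also have "\<dots> = (\<Sum>a\<in>arrows w. arrow_sign w a * ?g (idx w a))"
    by (rule sum.image_gen[symmetric]) simp
  finally show ?thesis unfolding cf_def tm_def by simp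
qed

lemma hyp_nth:
  fixes a :: "int \<Rightarrow> int"
  assumes "finite {n. a n \<noteq> 0}"
  shows "fls_nth ((fls_X - 1) * (\<Sum>n \<in> {n. a n \<noteq> 0}. fls_const (a n) * fls_X_intpow n)) k = a (k-1) - a k"
proof -
  have s: "fls_nth (\<Sum>n \<in> {n. a n \<noteq> 0}. fls_const (a n) * fls_X_intpow n) j = a j" for j
  proof -
    have "fls_nth (\<Sum>n \<in> {n. a n \<noteq> 0}. fls_const (a n) * fls_X_intpow n) j
       = (\<Sum>n \<in> {n. a n \<noteq> 0}. if j = n then a n else 0)"
      unfolding fls_nth_sum by (intro sum.cong) auto
    also have "\<dots> = a j" using assms by (simp add: sum.delta)
    finally show ?thesis .
  qed
  show ?thesis by (simp add: algebra_simps fls_X_times_conv_shift s)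
qed

lemma const_zero:
  fixes a :: "int \<Rightarrow> int"
  assumes fin: "finite {n. a n \<noteq> 0}" and c: "\<And>k. a (k - 1) = a k"
  shows "a n = 0"
proof -
  have all: "a m = a 0" for m
  proof (induction m rule: int_induct[where k = 0])
    case base then show ?case by simp
  next
    case (step1 i) then show ?case using c[of "i + 1"] by simp
  next
    case (step2 i) then show ?case using c[of i] by simp
  qed
  show ?thesis
  proof (rule ccontr)
    assume "a n \<noteq> 0"
    hence "{n. a n \<noteq> 0} = UNIV" using all by (metis (mono_tags) UNIV_eq_I mem_Collect_eq)
    thus False using fin infinite_UNIV_int by simp
  qed
qed

lemma main:
  assumes "unknots_with w n"
  shows "wf_gauss w \<Longrightarrow> finite {k. a k \<noteq> 0} \<Longrightarrow> (\<forall>k. cf w k = a (k - 1) - a k) \<Longrightarrow>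
    (\<Sum>k\<in>{k. a k \<noteq> 0}. \<bar>a k\<bar>) \<le> 2 * int n"
  using assms
proof (induction w n arbitrary: a rule: unknots_with.induct)
  case (zero w)
  have "cf w k = 0" for k using rsteps_cf[OF zero.hyps zero.prems(1)] cf_Nil by metis
  hence "a (k - 1) = a k" for k using zero.prems(3) by simp
  hence "a k = 0" for k using const_zero[OF zero.prems(2)] by blast
  thus ?case by simp
next
  case (step w u v n)
  have wfu: "wf_gauss u" and cfu: "cf u = cf w" using rsteps_cf[OF step(1) step.prems(1)] by auto
  obtain m1 e1 m2 e2 where wfv: "wf_gauss v" and e: "\<bar>e1\<bar> \<le> 1" "\<bar>e2\<bar> \<le> 1" and
    cfv: "\<forall>k. cf v k = cf u k
     + (e1 * (if k - 1 = m1 then 1 else 0) - e1 * (if k = m1 then 1 else 0))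
     + (e2 * (if k - 1 = m2 then 1 else 0) - e2 * (if k = m2 then 1 else 0))"
    using fd_cf[OF step(2) wfu] by blast
  define a' where "a' k = a k + e1 * (if k = m1 then 1 else 0) + e2 * (if k = m2 then 1 else 0)" for k
  define F where "F = {k. a k \<noteq> 0} \<union> {m1, m2}"
  have finF: "finite F" using step.prems(2) by (simp add: F_def)
  have sub': "{k. a' k \<noteq> 0} \<subseteq> F" by (auto simp: a'_def F_def)
  have fin': "finite {k. a' k \<noteq> 0}" using finite_subset[OF sub' finF] .
  have cf': "\<forall>k. cf v k = a' (k - 1) - a' k"
    using cfv step.prems(3) unfolding cfu by (auto simp: a'_def)
  have IH: "(\<Sum>k\<in>{k. a' k \<noteq> 0}. \<bar>a' k\<bar>) \<le> 2 * int n" using step.IH[OF wfv fin' cf'] .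
  have "(\<Sum>k\<in>{k. a k \<noteq> 0}. \<bar>a k\<bar>) = (\<Sum>k\<in>F. \<bar>a k\<bar>)"
    using finF by (intro sum.mono_neutral_left) (auto simp: F_def)
  also have "\<dots> \<le> (\<Sum>k\<in>F. \<bar>a' k\<bar> + (if k = m1 then \<bar>e1\<bar> else 0) + (if k = m2 then \<bar>e2\<bar> else 0))"
    by (intro sum_mono) (auto simp: a'_def)
  also have "\<dots> = (\<Sum>k\<in>F. \<bar>a' k\<bar>) + \<bar>e1\<bar> + \<bar>e2\<bar>"
  proof -
    have "m1 \<in> F" "m2 \<in> F" by (auto simp: F_def)
    thus ?thesis using finF by (simp add: sum.distrib sum.delta)
  qed
  also have "(\<Sum>k\<in>F. \<bar>a' k\<bar>) = (\<Sum>k\<in>{k. a' k \<noteq> 0}. \<bar>a' k\<bar>)"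
    using finF sub' by (intro sum.mono_neutral_right) auto
  finally show ?case using IH e by simp
qed

theorem theorem1p2:
  fixes D :: gauss and a :: "int \<Rightarrow> int"
  assumes "wf_gauss D"
    and "finite {n. a n \<noteq> 0}"
    and "aff_index_poly D =
           (fls_X - 1) * (\<Sum>n \<in> {n. a n \<noteq> 0}. fls_const (a n) * fls_X_intpow n)"
  shows "ereal (real_of_int (\<Sum>n \<in> {n. a n \<noteq> 0}. \<bar>a n\<bar>) / 2) \<le> ereal_of_enat (Fd D)"
proof -
  have cfD: "\<forall>k. cf D k = a (k - 1) - a k"
    using aff_nth[of D] hyp_nth[OF assms(2)] assms(3) by metis
  define S where "S = {enat n | n. unknots_with D n}"
  show ?thesis
  proof (cases "S = {}")
    case True
    hence "Fd D = \<infinity>" unfolding Fd_def S_def[symmetric] by (simp add: Inf_enat_def)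
    thus ?thesis by simp
  next
    case False
    then obtain x where "x \<in> S" by auto
    hence "Fd D \<in> S" unfolding Fd_def S_def[symmetric] Inf_enat_def by (auto intro: LeastI)
    then obtain n where n: "Fd D = enat n" "unknots_with D n" unfolding S_def by auto
    have "(\<Sum>n \<in> {n. a n \<noteq> 0}. \<bar>a n\<bar>) \<le> 2 * int n" using main[OF n(2) assms(1,2) cfD] .
    hence "real_of_int (\<Sum>n \<in> {n. a n \<noteq> 0}. \<bar>a n\<bar>) / 2 \<le> real n" by linarith
    thus ?thesis using n(1) by simp
  qed
qed

end
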